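(* Let $\mathbb{F}$ be a field and $n\ge3$. Let $\mathcal{A}_n$ be the $n\times n$ znz-pattern whose nonzero entries are exactly the diagonal positions $(i,i)$ for $1\le i\le n$, the superdiagonal positions $(i,i+1)$ for $1\le i\le n-1$, and the position $(n,1)$. Then $\mathcal{A}_n$ is potentially nilpotent over $\mathbb{F}$ if and only if $\mathbb{F}$ contains all the $n$-th roots of unity.
   Context: A znz-pattern is an $n\times n$ matrix with entries in $\{*,0\}$; a realization over $\mathbb{F}$ is a matrix in $M_n(\mathbb{F})$ whose nonzero entries are exactly at the $*$ positions; potentially nilpotent over $\mathbb{F}$ means some realization is nilpotent. $\mathbb{F}$ contains all the $n$-th roots of unity if $x^n-1$ factors into $n$ linear factors over $\mathbb{F}$. *)

theory Defs
  imports "Jordan_Normal_Form.Matrix" "HOL-Computational_Algebra.Polynomial"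
begin

text \<open>A znz-pattern of size n is represented by a predicate on index pairs (0-based):
  P i j holds iff position (i,j) is a star.\<close>

definition realization :: "nat \<Rightarrow> (nat \<Rightarrow> nat \<Rightarrow> bool) \<Rightarrow> 'a::field mat \<Rightarrow> bool" where
  "realization n P A \<longleftrightarrow> A \<in> carrier_mat n n \<and>
     (\<forall>i<n. \<forall>j<n. A $$ (i, j) \<noteq> 0 \<longleftrightarrow> P i j)"

definition potentially_nilpotent :: "nat \<Rightarrow> (nat \<Rightarrow> nat \<Rightarrow> bool) \<Rightarrow> 'a::field itself \<Rightarrow> bool" where
  "potentially_nilpotent n P F \<longleftrightarrow>
     (\<exists>A :: 'a mat. realization n P A \<and> (\<exists>k. A ^\<^sub>m k = 0\<^sub>m n n))"

definition pattern_A :: "nat \<Rightarrow> nat \<Rightarrow> nat \<Rightarrow> bool" where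
  "pattern_A n i j \<longleftrightarrow> j = i \<or> j = i + 1 \<or> (i = n - 1 \<and> j = 0)"

definition contains_nth_roots_of_unity :: "'a::field itself \<Rightarrow> nat \<Rightarrow> bool" where
  "contains_nth_roots_of_unity F n \<longleftrightarrow>
     (\<exists>rs :: 'a list. length rs = n \<and> monom 1 n - 1 = (\<Prod>r\<leftarrow>rs. [:- r, 1:]))"

end

theory Submission imports Defs begin

definition meval :: "nat \<Rightarrow> 'a::field mat \<Rightarrow> 'a poly \<Rightarrow> 'a mat" where
  "meval n A p = foldr (\<lambda>a M. a \<cdot>\<^sub>m 1\<^sub>m n + A * M) (coeffs p) (0\<^sub>m n n)"

locale mctx =
  fixes n :: nat and A :: "'a::field mat"
  assumes A: "A \<in> carrier_mat n n"
begin

abbreviation "E p \<equiv> meval n A p"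

lemma foldr_carrier: "foldr (\<lambda>a M. a \<cdot>\<^sub>m 1\<^sub>m n + A * M) xs (0\<^sub>m n n) \<in> carrier_mat n n"
  by (induct xs) (use A in auto)

lemma E_carrier[simp]: "E p \<in> carrier_mat n n"
  unfolding meval_def by (rule foldr_carrier)

lemma E_dim[simp]: "dim_row (E p) = n" "dim_col (E p) = n"
  using E_carrier[of p] unfolding carrier_mat_def by auto

lemma E_0[simp]: "E 0 = 0\<^sub>m n n"
  unfolding meval_def by simp

lemma E_pCons: "E (pCons a p) = a \<cdot>\<^sub>m 1\<^sub>m n + A * E p"
proof (cases "a = 0 \<and> p = 0")
  case True
  then show ?thesis using A by (auto intro!: eq_matI)
next
  case False
  then have "coeffs (pCons a p) = a # coeffs p" by (auto simp: cCons_def)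
  then show ?thesis unfolding meval_def by simp
qed

lemma E_pCons0: "E (pCons 0 p) = A * E p"
  using A by (simp add: E_pCons) (intro eq_matI; auto)

lemma E_const: "E [:a:] = a \<cdot>\<^sub>m 1\<^sub>m n"
  using E_pCons[of a 0] A by (auto intro!: eq_matI)

lemma E_1: "E 1 = 1\<^sub>m n"
  using E_const[of 1] by (auto simp: one_pCons intro!: eq_matI)

lemma E_add: "E (p + q) = E p + E q"
proof (induct p q rule: poly_induct2)
  case 0
  then show ?case by (auto intro!: eq_matI)
next
  case (pCons a p b q)
  have "E (pCons a p + pCons b q) = (a+b) \<cdot>\<^sub>m 1\<^sub>m n + A * (E p + E q)"
    by (simp add: E_pCons pCons)
  also have "\<dots> = (a \<cdot>\<^sub>m 1\<^sub>m n + A * E p) + (b \<cdot>\<^sub>m 1\<^sub>m n + A * E q)"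
    using A by (subst mult_add_distrib_mat[of A n n "E p" n "E q"], auto intro!: eq_matI simp: algebra_simps)
  finally show ?case by (simp add: E_pCons)
qed

lemma E_smult: "E (smult c p) = c \<cdot>\<^sub>m E p"
proof (induct p)
  case 0
  then show ?case by (auto intro!: eq_matI)
next
  case (pCons a p)
  have "E (smult c (pCons a p)) = (c*a) \<cdot>\<^sub>m 1\<^sub>m n + A * (c \<cdot>\<^sub>m E p)"
    by (simp add: E_pCons pCons)
  also have "\<dots> = c \<cdot>\<^sub>m (a \<cdot>\<^sub>m 1\<^sub>m n + A * E p)"
    using A by (subst mult_smult_distrib[of A n n "E p" n], auto) (intro eq_matI; auto simp: algebra_simps)
  finally show ?case by (simp add: E_pCons)
qed

lemma E_mult: "E (p * q) = E p * E q"
proof (induct p)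
  case 0
  then show ?case using A by (simp add: left_mult_zero_mat[OF E_carrier])
next
  case (pCons a p)
  have "E (pCons a p * q) = a \<cdot>\<^sub>m E q + A * (E p * E q)"
    by (simp add: E_add E_smult E_pCons0 pCons)
  also have "\<dots> = (a \<cdot>\<^sub>m 1\<^sub>m n + A * E p) * E q"
    using A by (simp add: add_mult_distrib_mat[of _ n n _ "E q" n] mult_smult_assoc_mat[of _ n n _ n] assoc_mult_mat[of A n n "E p" n "E q" n])
  finally show ?case by (simp add: E_pCons)
qed

lemma E_comm: "E p * E q = E q * E p"
  by (metis E_mult mult.commute)

lemma E_x: "E [:0,1:] = A"
  using A by (simp add: E_pCons0 E_1[unfolded one_pCons])

lemma E_xpow: "E ([:0,1:]^m) = A ^\<^sub>m m"
proof (induct m)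
  case 0
  then show ?case using A by (simp add: E_1)
next
  case (Suc m)
  have "E ([:0,1:]^Suc m) = E ([:0,1:]^m) * E [:0,1:]"
    by (simp only: power_Suc2 E_mult)
  then show ?case by (simp add: Suc E_x)
qed

lemma E_monom: "E (monom 1 m) = A ^\<^sub>m m"
  by (simp add: monom_altdef E_xpow)

lemma pow_comm: "A ^\<^sub>m j * E p = E p * A ^\<^sub>m j"
  by (metis E_xpow E_comm)

lemma mat_smult_zero_cancel:
  assumes "(B :: 'a mat) \<in> carrier_mat n n" "c \<noteq> 0" "c \<cdot>\<^sub>m B = 0\<^sub>m n n"
  shows "B = 0\<^sub>m n n"
proof (rule eq_matI)
  fix i j assume "i < dim_row (0\<^sub>m n n)" "j < dim_col (0\<^sub>m n n)"
  then have ij: "i < n" "j < n" by auto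
  have "c * B $$ (i,j) = (c \<cdot>\<^sub>m B) $$ (i,j)" using assms(1) ij by auto
  also have "\<dots> = 0" using assms(3) ij by simp
  finally have "c * B $$ (i,j) = 0" .
  then show "B $$ (i,j) = 0\<^sub>m n n $$ (i,j)" using assms(2) ij by simp
qed (use assms in auto)

lemma nil_cancel:
  assumes B: "B \<in> carrier_mat n n" and k: "A ^\<^sub>m k = 0\<^sub>m n n"
    and Bu: "B * E u = 0\<^sub>m n n" and u0: "coeff u 0 \<noteq> 0"
  shows "B = 0\<^sub>m n n"
proof -
  obtain a w where u: "u = pCons a w" by (cases u)
  have a: "a \<noteq> 0" using u0 u by simp
  have Eu: "E u = a \<cdot>\<^sub>m 1\<^sub>m n + A * E w" using u E_pCons by simp
  have step: "B * A ^\<^sub>m j = 0\<^sub>m n n" if IH: "B * A ^\<^sub>m (Suc j) = 0\<^sub>m n n" for j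
  proof -
    have Aj: "A ^\<^sub>m j \<in> carrier_mat n n" using A by simp
    have "B * A ^\<^sub>m j * E u = B * (E u * A ^\<^sub>m j)"
      using B Aj by (simp add: assoc_mult_mat[of B n n _ n _ n] pow_comm)
    also have "\<dots> = (B * E u) * A ^\<^sub>m j" using B Aj by (simp add: assoc_mult_mat[of B n n "E u" n "A ^\<^sub>m j" n])
    also have "\<dots> = 0\<^sub>m n n" using Bu Aj by (simp add: left_mult_zero_mat)
    finally have 1: "B * A ^\<^sub>m j * E u = 0\<^sub>m n n" .
    have "B * A ^\<^sub>m j * E u = a \<cdot>\<^sub>m (B * A ^\<^sub>m j) + (B * A ^\<^sub>m j * A) * E w"
      unfolding Eu using B Aj A
      by (simp add: mult_add_distrib_mat[of _ n n _ n] mult_smult_distrib[of _ n n _ n] assoc_mult_mat[of "B * A ^\<^sub>m j" n n A n "E w" n])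
    also have "B * A ^\<^sub>m j * A = B * A ^\<^sub>m (Suc j)" using B Aj A by (simp add: assoc_mult_mat[of B n n _ n A n])
    finally have 2: "B * A ^\<^sub>m j * E u = a \<cdot>\<^sub>m (B * A ^\<^sub>m j) + B * A ^\<^sub>m (Suc j) * E w" .
    have "a \<cdot>\<^sub>m (B * A ^\<^sub>m j) = 0\<^sub>m n n"
      using 1 2 IH B Aj by (simp add: left_mult_zero_mat)
    then show ?thesis using a mat_smult_zero_cancel[of "B * A ^\<^sub>m j" a] B Aj by simp
  qed
  have "\<forall>i\<le>k. B * A ^\<^sub>m (k - i) = 0\<^sub>m n n"
  proof (intro allI impI)
    fix i assume "i \<le> k"
    then show "B * A ^\<^sub>m (k - i) = 0\<^sub>m n n"
    proof (induct i)
      case 0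
      then show ?case using k B by simp
    next
      case (Suc i)
      then have "B * A ^\<^sub>m (Suc (k - Suc i)) = 0\<^sub>m n n"
        by (simp add: Suc_diff_Suc)
      then show ?case by (rule step)
    qed
  qed
  then have "B * A ^\<^sub>m 0 = 0\<^sub>m n n" by (metis diff_self_eq_0 order_refl)
  then show ?thesis using B A by simp
qed

lemma E_lin: assumes v: "v \<in> carrier_vec n"
  shows "E [:a,1:] *\<^sub>v v = A *\<^sub>v v + a \<cdot>\<^sub>v v"
proof -
  have o: "(1::'a) \<cdot>\<^sub>m 1\<^sub>m n = 1\<^sub>m n" by (auto intro!: eq_matI)
  have "E [:a,1:] = a \<cdot>\<^sub>m 1\<^sub>m n + A" using A by (simp add: E_pCons o)
  then have "E [:a,1:] *\<^sub>v v = (a \<cdot>\<^sub>m 1\<^sub>m n) *\<^sub>v v + A *\<^sub>v v"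
    using A v by (simp add: add_mult_distrib_mat_vec[of _ n n])
  also have "(a \<cdot>\<^sub>m 1\<^sub>m n) *\<^sub>v v = a \<cdot>\<^sub>v v"
    using v by (intro eq_vecI) (auto simp: smult_scalar_prod_distrib[of _ n])
  finally show ?thesis using A v by (simp add: comm_add_vec[of _ n])
qed

lemma pow_add: "A ^\<^sub>m (a + b) = A ^\<^sub>m a * A ^\<^sub>m b"
  by (metis E_xpow E_mult power_add)

lemma pow_Suc': "A ^\<^sub>m (Suc t) = A * A ^\<^sub>m t"
  by (metis E_x E_xpow E_comm E_mult power_Suc2 power_Suc)

end

definition lp :: "'a::field list \<Rightarrow> 'a poly" where
  "lp rs = (\<Prod>r\<leftarrow>rs. [:-r,1:])"

lemma lp_Cons: "lp (r # rs) = [:-r,1:] * lp rs" by (simp add: lp_def)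
lemma lp_Nil: "lp [] = 1" by (simp add: lp_def)

lemma lp_root: "r \<in> set rs \<Longrightarrow> poly (lp rs) r = 0"
  by (induct rs) (auto simp: lp_Cons lp_Nil)

lemma lp_deg: "degree (lp rs) = length rs \<and> lead_coeff (lp rs) = 1"
proof (induct rs)
  case Nil
  then show ?case by (simp add: lp_Nil)
next
  case (Cons r rs)
  then have nz: "lp rs \<noteq> 0" by auto
  have "degree (lp (r # rs)) = degree [:-r,1:] + degree (lp rs)"
    unfolding lp_Cons by (rule degree_mult_eq) (use nz in auto)
  moreover have "lead_coeff (lp (r # rs)) = lead_coeff [:-r,1:] * lead_coeff (lp rs)"
    unfolding lp_Cons by (rule lead_coeff_mult)
  ultimately show ?case using Cons by auto
qed

locale patctx = mctx n A for n and A :: "'a::field mat" +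
  assumes n3: "3 \<le> n"
    and pat: "\<And>i j. i < n \<Longrightarrow> j < n \<Longrightarrow> A $$ (i,j) \<noteq> 0 \<longleftrightarrow> pattern_A n i j"
begin

lemma zero: "i < n \<Longrightarrow> j < n \<Longrightarrow> \<not> pattern_A n i j \<Longrightarrow> A $$ (i,j) = 0"
  using pat by blast

lemma nz_diag: "i < n \<Longrightarrow> A $$ (i,i) \<noteq> 0"
  using pat by (simp add: pattern_A_def)

lemma nz_sup: "Suc i < n \<Longrightarrow> A $$ (i,Suc i) \<noteq> 0"
  using pat by (simp add: pattern_A_def)

lemma nz_corner: "A $$ (n-1,0) \<noteq> 0"
  using pat[of "n-1" 0] n3 by (simp add: pattern_A_def)

abbreviation "e j \<equiv> unit_vec n j"

lemma colj: assumes "0 < j" "j < n"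
  shows "A *\<^sub>v e j + (- A $$ (j,j)) \<cdot>\<^sub>v e j = A $$ (j-1,j) \<cdot>\<^sub>v e (j-1)"
proof (rule eq_vecI)
  fix i assume "i < dim_vec (A $$ (j-1,j) \<cdot>\<^sub>v e (j-1))"
  then have i: "i < n" by simp
  show "(A *\<^sub>v e j + (- A $$ (j,j)) \<cdot>\<^sub>v e j) $ i = (A $$ (j-1,j) \<cdot>\<^sub>v e (j-1)) $ i"
  proof -
    have "(A *\<^sub>v e j + (- A $$ (j,j)) \<cdot>\<^sub>v e j) $ i = A $$ (i,j) - (if i = j then A $$ (j,j) else 0)"
      using i assms A by simp
    also have "\<dots> = (if i = j - 1 then A $$ (j-1,j) else 0)"
    proof -
      have "i \<noteq> j \<Longrightarrow> i \<noteq> j - 1 \<Longrightarrow> A $$ (i,j) = 0"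
        using zero[OF i assms(2)] assms by (auto simp: pattern_A_def)
      then show ?thesis using assms by auto
    qed
    finally show ?thesis using i assms by simp
  qed
qed (use A in simp)

lemma col0:
  shows "A *\<^sub>v e 0 + (- A $$ (0,0)) \<cdot>\<^sub>v e 0 = A $$ (n-1,0) \<cdot>\<^sub>v e (n-1)"
proof (rule eq_vecI)
  fix i assume "i < dim_vec (A $$ (n-1,0) \<cdot>\<^sub>v e (n-1))"
  then have i: "i < n" by simp
  have n0: "0 < n" using n3 by simp
  show "(A *\<^sub>v e 0 + (- A $$ (0,0)) \<cdot>\<^sub>v e 0) $ i = (A $$ (n-1,0) \<cdot>\<^sub>v e (n-1)) $ i"
  proof -
    have "(A *\<^sub>v e 0 + (- A $$ (0,0)) \<cdot>\<^sub>v e 0) $ i = A $$ (i,0) - (if i = 0 then A $$ (0,0) else 0)"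
      using i n0 A by simp
    also have "\<dots> = (if i = n - 1 then A $$ (n-1,0) else 0)"
    proof -
      have "i \<noteq> 0 \<Longrightarrow> i \<noteq> n - 1 \<Longrightarrow> A $$ (i,0) = 0"
        using zero[OF i n0] by (auto simp: pattern_A_def)
      then show ?thesis using n3 by auto
    qed
    finally show ?thesis using i n0 by simp
  qed
qed (use A in simp)

lemma rowf: assumes i: "Suc i < n" and v: "v \<in> carrier_vec n"
  shows "(A *\<^sub>v v) $ i = A $$ (i,i) * v $ i + A $$ (i,Suc i) * v $ Suc i"
proof -
  have "(A *\<^sub>v v) $ i = (\<Sum>k\<in>{0..<n}. A $$ (i,k) * v $ k)"
    using A v i by (simp add: scalar_prod_def)
  also have "\<dots> = (\<Sum>k\<in>{i, Suc i}. A $$ (i,k) * v $ k)"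
  proof (rule sum.mono_neutral_right)
    show "\<forall>k\<in>{0..<n} - {i, Suc i}. A $$ (i, k) * v $ k = 0"
    proof
      fix k assume k: "k \<in> {0..<n} - {i, Suc i}"
      have "i \<noteq> n - 1" using i by simp
      then have "A $$ (i,k) = 0" using zero[of i k] i k by (auto simp: pattern_A_def)
      then show "A $$ (i, k) * v $ k = 0" by simp
    qed
  qed (use i in auto)
  also have "\<dots> = A $$ (i,i) * v $ i + A $$ (i,Suc i) * v $ Suc i" by simp
  finally show ?thesis .
qed


abbreviation "ds \<equiv> map (\<lambda>i. A $$ (i,i)) [0..<n]"
abbreviation "S t \<equiv> \<Prod>i\<in>{n-1-t..<n-1}. A $$ (i, Suc i)"

lemma vec_smult_lemma: assumes "x \<in> carrier_vec n" "y \<in> carrier_vec n"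
  shows "c \<cdot>\<^sub>v x + b \<cdot>\<^sub>v (c \<cdot>\<^sub>v y) = c \<cdot>\<^sub>v (x + b \<cdot>\<^sub>v (y :: 'a vec))"
  using assms by (intro eq_vecI) (auto simp: algebra_simps)

lemma Qlem: "t < n \<Longrightarrow> E (lp (drop (n-t) ds)) *\<^sub>v e (n-1) = S t \<cdot>\<^sub>v e (n-1-t)"
proof (induct t)
  case 0
  then show ?case using A by (auto simp: lp_Nil E_1 intro!: eq_vecI)
next
  case (Suc t)
  define j where "j = n - Suc t"
  have j: "0 < j" "j < n" "Suc j = n - t" "n - 1 - t = j" "n - 1 - Suc t = j - 1"
    using Suc.prems unfolding j_def by auto
  have dr: "drop j ds = A $$ (j,j) # drop (Suc j) ds"
    using j by (metis (no_types, lifting) Cons_nth_drop_Suc diff_zero length_map length_upt nth_map nth_upt add_0)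
  have "E (lp (drop j ds)) *\<^sub>v e (n-1) = E [:-A $$ (j,j),1:] *\<^sub>v (E (lp (drop (n-t) ds)) *\<^sub>v e (n-1))"
    unfolding dr lp_Cons E_mult j(3) by (rule assoc_mult_mat_vec[of _ n n _ n]) auto
  also have "\<dots> = E [:-A $$ (j,j),1:] *\<^sub>v (S t \<cdot>\<^sub>v e j)"
    using Suc j by simp
  also have "\<dots> = A *\<^sub>v (S t \<cdot>\<^sub>v e j) + (- A $$ (j,j)) \<cdot>\<^sub>v (S t \<cdot>\<^sub>v e j)"
    by (rule E_lin) simp
  also have "\<dots> = S t \<cdot>\<^sub>v (A *\<^sub>v e j + (- A $$ (j,j)) \<cdot>\<^sub>v e j)"
    using mult_mat_vec[OF A unit_vec_carrier, of "S t" j]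
      vec_smult_lemma[of "A *\<^sub>v e j" "e j" "S t" "- A $$ (j,j)"] A by simp
  also have "\<dots> = S t \<cdot>\<^sub>v (A $$ (j-1,j) \<cdot>\<^sub>v e (j-1))" using colj j by simp
  also have "\<dots> = S (Suc t) \<cdot>\<^sub>v e (j-1)"
  proof -
    have "S (Suc t) = (\<Prod>i\<in>{j-1..<n-1}. A $$ (i, Suc i))" by (simp only: j(5))
    also have "\<dots> = A $$ (j-1, Suc (j-1)) * (\<Prod>i\<in>{Suc (j-1)..<n-1}. A $$ (i, Suc i))"
      by (rule prod.atLeast_Suc_lessThan) (use j in simp)
    also have "Suc (j-1) = n - 1 - t" using j by simp
    finally have SS: "S (Suc t) = A $$ (j-1, j) * S t" using j by simp
    show ?thesis unfolding SS by (intro eq_vecI) (simp_all add: ac_simps)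
  qed
  finally show ?case unfolding j_def using j(5) unfolding j_def by simp
qed


abbreviation "K \<equiv> A $$ (n-1,0) * S (n-1)"

lemma S_nz: "S t \<noteq> 0"
  using nz_sup by (auto simp: prod_zero_iff)

lemma K_nz: "K \<noteq> 0" by (metis S_nz nz_corner mult_eq_0_iff)

lemma Glem1: "E (lp ds) *\<^sub>v e (n-1) = K \<cdot>\<^sub>v e (n-1)"
proof -
  have n0: "0 < n" using n3 by simp
  have dr: "ds = A $$ (0,0) # drop 1 ds"
    using n0 by (metis (no_types, lifting) Cons_nth_drop_Suc One_nat_def diff_zero drop0 length_map length_upt nth_map nth_upt add_0)
  have d1: "drop 1 ds = drop (n - (n-1)) ds" using n0 by simp
  have "E (lp ds) *\<^sub>v e (n-1) = E [:-A $$ (0,0),1:] *\<^sub>v (E (lp (drop (n - (n-1)) ds)) *\<^sub>v e (n-1))"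
    by (subst dr, unfold lp_Cons E_mult d1) (rule assoc_mult_mat_vec[of _ n n _ n]; simp)
  also have "\<dots> = E [:-A $$ (0,0),1:] *\<^sub>v (S (n-1) \<cdot>\<^sub>v e 0)"
    using Qlem[of "n-1"] n0 by simp
  also have "\<dots> = A *\<^sub>v (S (n-1) \<cdot>\<^sub>v e 0) + (- A $$ (0,0)) \<cdot>\<^sub>v (S (n-1) \<cdot>\<^sub>v e 0)"
    by (rule E_lin) simp
  also have "\<dots> = S (n-1) \<cdot>\<^sub>v (A *\<^sub>v e 0 + (- A $$ (0,0)) \<cdot>\<^sub>v e 0)"
    using mult_mat_vec[OF A unit_vec_carrier, of "S (n-1)" 0]
      vec_smult_lemma[of "A *\<^sub>v e 0" "e 0" "S (n-1)" "- A $$ (0,0)"] A by simp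
  also have "\<dots> = S (n-1) \<cdot>\<^sub>v (A $$ (n-1,0) \<cdot>\<^sub>v e (n-1))" using col0 by simp
  also have "\<dots> = K \<cdot>\<^sub>v e (n-1)" by (intro eq_vecI) (simp_all add: ac_simps)
  finally show ?thesis .
qed

lemma vec_cancel: assumes "c \<noteq> 0" "x \<in> carrier_vec n" "y \<in> carrier_vec n" "c \<cdot>\<^sub>v x = c \<cdot>\<^sub>v (y :: 'a vec)"
  shows "x = y"
proof (rule eq_vecI)
  fix i assume i: "i < dim_vec y"
  have "c * x $ i = (c \<cdot>\<^sub>v x) $ i" using i assms(2,3) by simp
  also have "\<dots> = (c \<cdot>\<^sub>v y) $ i" using assms(4) by simp
  also have "\<dots> = c * y $ i" using i by simp
  finally show "x $ i = y $ i" using assms(1) by simp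
qed (use assms in simp)

lemma Glem2: assumes jn: "j < n" shows "E (lp ds) *\<^sub>v e j = K \<cdot>\<^sub>v e j"
proof -
  define t where "t = n - 1 - j"
  have t: "t < n" "n - 1 - t = j" using jn unfolding t_def by auto
  let ?Q = "E (lp (drop (n-t) ds))"
  let ?G = "E (lp ds)"
  have Q: "?Q *\<^sub>v e (n-1) = S t \<cdot>\<^sub>v e j" using Qlem[OF t(1)] t by simp
  have "S t \<cdot>\<^sub>v (?G *\<^sub>v e j) = ?G *\<^sub>v (S t \<cdot>\<^sub>v e j)"
    by (rule mult_mat_vec[symmetric, of _ n n]) auto
  also have "\<dots> = ?G *\<^sub>v (?Q *\<^sub>v e (n-1))" unfolding Q ..
  also have "\<dots> = (?G * ?Q) *\<^sub>v e (n-1)"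
    by (rule assoc_mult_mat_vec[symmetric, of _ n n _ n]) auto
  also have "\<dots> = (?Q * ?G) *\<^sub>v e (n-1)" by (simp add: E_comm)
  also have "\<dots> = ?Q *\<^sub>v (?G *\<^sub>v e (n-1))"
    by (rule assoc_mult_mat_vec[of _ n n _ n]) auto
  also have "\<dots> = ?Q *\<^sub>v (K \<cdot>\<^sub>v e (n-1))" unfolding Glem1 ..
  also have "\<dots> = K \<cdot>\<^sub>v (?Q *\<^sub>v e (n-1))"
    by (rule mult_mat_vec[of _ n n]) auto
  also have "\<dots> = S t \<cdot>\<^sub>v (K \<cdot>\<^sub>v e j)" unfolding Q by (intro eq_vecI) (simp_all add: ac_simps)
  finally have X: "S t \<cdot>\<^sub>v (?G *\<^sub>v e j) = S t \<cdot>\<^sub>v (K \<cdot>\<^sub>v e j)" .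
  show ?thesis by (rule vec_cancel[OF S_nz _ _ X]) (auto intro: mult_mat_vec_carrier[of _ n n])
qed

lemma Glem: "E (lp ds) = K \<cdot>\<^sub>m 1\<^sub>m n"
proof (rule eq_matI)
  fix i j assume ij: "i < dim_row (K \<cdot>\<^sub>m 1\<^sub>m n)" "j < dim_col (K \<cdot>\<^sub>m 1\<^sub>m n)"
  then have i: "i < n" and j: "j < n" by auto
  have "E (lp ds) $$ (i,j) = (E (lp ds) *\<^sub>v e j) $ i" using i j by simp
  also have "\<dots> = (K \<cdot>\<^sub>v e j) $ i" by (simp add: Glem2 j)
  also have "\<dots> = (K \<cdot>\<^sub>m 1\<^sub>m n) $$ (i,j)" using i j by simp
  finally show "E (lp ds) $$ (i,j) = (K \<cdot>\<^sub>m 1\<^sub>m n) $$ (i,j)" .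
qed auto


lemma pow_vec: "t \<le> n - 1 \<Longrightarrow> (A ^\<^sub>m t *\<^sub>v e (n-1)) $ (n-1-t) \<noteq> 0 \<and>
   (\<forall>i < n-1-t. (A ^\<^sub>m t *\<^sub>v e (n-1)) $ i = 0)"
proof (induct t)
  case 0
  have n0: "0 < n" using n3 by simp
  then show ?case using A by simp
next
  case (Suc t)
  let ?v = "A ^\<^sub>m t *\<^sub>v e (n-1)"
  have v: "?v \<in> carrier_vec n" using A by (intro mult_mat_vec_carrier[of _ n n]) auto
  have IH: "?v $ (n-1-t) \<noteq> 0" "\<And>i. i < n-1-t \<Longrightarrow> ?v $ i = 0" using Suc by auto
  have eq: "A ^\<^sub>m Suc t *\<^sub>v e (n-1) = A *\<^sub>v ?v"
    unfolding pow_Suc' by (rule assoc_mult_mat_vec[of _ n n _ n]) (use A in auto)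
  define i0 where "i0 = n - 1 - Suc t"
  have i0: "Suc i0 < n" "Suc i0 = n - 1 - t" using Suc.prems unfolding i0_def by auto
  have r: "(A *\<^sub>v ?v) $ i = A $$ (i,i) * ?v $ i + A $$ (i,Suc i) * ?v $ Suc i" if "i \<le> i0" for i
    by (rule rowf) (use that i0 v in auto)
  have "(A *\<^sub>v ?v) $ i0 \<noteq> 0"
    using r[of i0] IH i0 nz_sup[OF i0(1)] by simp
  moreover have "(A *\<^sub>v ?v) $ i = 0" if "i < i0" for i
    using r[of i] IH i0 that by simp
  ultimately show ?case unfolding eq i0_def by simp
qed

lemma nilp_G: assumes k: "A ^\<^sub>m k = 0\<^sub>m n n"
  shows "lp ds = monom 1 n + [:K:]"
proof (rule ccontr)
  assume ne: "lp ds \<noteq> monom 1 n + [:K:]"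
  define h where "h = lp ds + [:-K:]"
  have lpd: "degree (lp ds) = n" "lead_coeff (lp ds) = 1" using lp_deg[of ds] by auto
  have n0: "0 < n" using n3 by simp
  have dh: "degree h = n" unfolding h_def using lpd n0 by (subst degree_add_eq_left) auto
  have "coeff [:-K:] n = 0" using n0 by (cases n) auto
  then have ch: "coeff h n = 1" unfolding h_def using lpd n0 by simp
  have hK: "lp ds = h + [:K:]" unfolding h_def by (simp add: add.assoc)
  have hne: "h \<noteq> monom 1 n" using ne hK by auto
  have h0: "h \<noteq> 0" using dh n0 by auto
  have "E (lp ds) = E h + E [:K:]" by (subst hK) (rule E_add)
  then have "E h + K \<cdot>\<^sub>m 1\<^sub>m n = K \<cdot>\<^sub>m 1\<^sub>m n" using Glem E_const by simp
  then have Eh: "E h = 0\<^sub>m n n"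
  proof -
    assume H: "E h + K \<cdot>\<^sub>m 1\<^sub>m n = K \<cdot>\<^sub>m 1\<^sub>m n"
    show ?thesis
    proof (rule eq_matI)
      fix i j assume "i < dim_row (0\<^sub>m n n)" "j < dim_col (0\<^sub>m n n)"
      then have ij: "i < n" "j < n" by auto
      have 1: "(E h + K \<cdot>\<^sub>m 1\<^sub>m n) $$ (i,j) = E h $$ (i,j) + (K \<cdot>\<^sub>m 1\<^sub>m n) $$ (i,j)"
        using ij by simp
      have 2: "(E h + K \<cdot>\<^sub>m 1\<^sub>m n) $$ (i,j) = (K \<cdot>\<^sub>m 1\<^sub>m n) $$ (i,j)" using H by simp
      have aux: "\<And>x y :: 'a. x + y = y \<Longrightarrow> x = 0" by simp
      have "E h $$ (i,j) = 0" by (rule aux[OF trans[OF 1[symmetric] 2]])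
      then show "E h $$ (i,j) = 0\<^sub>m n n $$ (i,j)" using ij by simp
    qed auto
  qed
  obtain q where hq: "h = [:-0,1:] ^ order 0 h * q" and nd: "\<not> [:-0,1:] dvd q"
    using order_decomp[OF h0] by blast
  define m where "m = order 0 h"
  have hq': "h = monom 1 m * q" using hq unfolding m_def by (simp add: monom_altdef)
  have q0: "coeff q 0 \<noteq> 0" using nd dvd_iff_poly_eq_0[of 0 q] by (simp add: poly_0_coeff_0)
  have qnz: "q \<noteq> 0" using q0 by auto
  have "E h = A ^\<^sub>m m * E q" using hq' by (simp add: E_mult E_monom)
  then have Am0: "A ^\<^sub>m m * E q = 0\<^sub>m n n" using Eh by simp
  have Am: "A ^\<^sub>m m = 0\<^sub>m n n" by (rule nil_cancel[OF _ k Am0 q0]) (use A in simp)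
  have mn: "m < n"
  proof (rule ccontr)
    assume "\<not> m < n"
    have "degree h = degree (monom (1::'a) m) + degree q" unfolding hq'
      by (rule degree_mult_eq) (use qnz in auto)
    then have "degree h = m + degree q" by (simp add: degree_monom_eq)
    then have mq: "m = n" "degree q = 0" using dh \<open>\<not> m < n\<close> by auto
    then obtain a where qa: "q = [:a:]" using degree0_coeffs by blast
    have "coeff h n = a" unfolding hq' qa mq by (simp add: coeff_monom_mult)
    then have "a = 1" using ch by simp
    then have "h = monom 1 n" using hq' qa mq by (simp add: one_pCons[symmetric])
    then show False using hne by simp
  qed
  have "A ^\<^sub>m (n-1) = A ^\<^sub>m m * A ^\<^sub>m (n - 1 - m)" using mn pow_add[of m "n-1-m"] by simp
  also have "\<dots> = 0\<^sub>m n n" using Am A by (simp add: left_mult_zero_mat)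
  finally have "A ^\<^sub>m (n-1) *\<^sub>v e (n-1) = 0\<^sub>v n" by (auto intro!: eq_vecI)
  then show False using pow_vec[of "n-1"] n0 by simp
qed


end

lemma rescale:
  assumes r: "(r::'a::field) \<noteq> 0"
  shows "pcompose (lp ds) [:0,r:] = smult (r ^ length ds) (lp (map (\<lambda>d. d / r) ds))"
proof (induct ds)
  case Nil
  then show ?case by (simp add: lp_Nil pcompose_1)
next
  case (Cons d ds)
  have 1: "pcompose [:-d,1:] [:0,r:] = [:-d, r:]" by (simp add: pcompose_pCons pcompose_1)
  have 2: "smult r [:-(d/r),1:] = [:-d, r:]" using r by simp
  have "pcompose (lp (d # ds)) [:0,r:] = pcompose [:-d,1:] [:0,r:] * pcompose (lp ds) [:0,r:]"
    by (simp only: lp_Cons pcompose_mult)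
  also have "\<dots> = smult r [:-(d/r),1:] * smult (r ^ length ds) (lp (map (\<lambda>d. d / r) ds))"
    by (simp only: 1 2 Cons)
  also have "\<dots> = smult (r * r ^ length ds) ([:-(d/r),1:] * lp (map (\<lambda>d. d / r) ds))"
    by (simp only: mult_smult_left mult_smult_right smult_smult mult.commute)
  also have "\<dots> = smult (r ^ length (d # ds)) (lp (map (\<lambda>d. d / r) (d # ds)))"
    by (simp only: lp_Cons list.map length_Cons power_Suc)
  finally show ?case .
qed

theorem theorem4p6:
  fixes n :: nat
  assumes "n \<ge> 3"
  shows "potentially_nilpotent n (pattern_A n) TYPE('a::field) \<longleftrightarrow>
         contains_nth_roots_of_unity TYPE('a) n"
proof
  assume "potentially_nilpotent n (pattern_A n) TYPE('a::field)"
  then obtain A :: "'a mat" and k where R: "realization n (pattern_A n) A" and k: "A ^\<^sub>m k = 0\<^sub>m n n"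
    unfolding potentially_nilpotent_def by blast
  interpret P: patctx n A
    using R assms unfolding realization_def by unfold_locales auto
  have G: "lp P.ds = monom 1 n + [:P.K:]" by (rule P.nilp_G[OF k])
  have n0: "0 < n" using assms by simp
  define r where "r = A $$ (0,0)"
  have r0: "r \<noteq> 0" unfolding r_def using P.nz_diag n0 by simp
  have "r \<in> set P.ds" unfolding r_def using n0 by auto
  then have "poly (lp P.ds) r = 0" by (rule lp_root)
  then have rK0: "r ^ n + P.K = 0" unfolding G by (simp add: poly_monom)
  have aux: "\<And>x y :: 'a. x + y = 0 \<Longrightarrow> y = - x" by (simp add: add_eq_0_iff)
  have rK: "P.K = - (r ^ n)" by (rule aux[OF rK0])
  define rs where "rs = map (\<lambda>d. d / r) P.ds"
  have "smult (r ^ n) (lp rs) = pcompose (lp P.ds) [:0,r:]"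
    unfolding rs_def rescale[OF r0] by simp
  also have "\<dots> = smult (r ^ n) (monom 1 n - 1)"
  proof (rule poly_eqI)
    fix i
    have "coeff (pcompose (lp P.ds) [:0,r:]) i = r ^ i * coeff (monom 1 n + [:P.K:]) i"
      unfolding G by (rule coeff_pcompose_linear)
    also have "\<dots> = coeff (smult (r ^ n) (monom 1 n - 1)) i"
      using rK n0 by (cases i) (auto simp: coeff_pCons split: nat.splits)
    finally show "coeff (pcompose (lp P.ds) [:0,r:]) i = coeff (smult (r ^ n) (monom 1 n - 1)) i" .
  qed
  finally have "smult (r ^ n) (lp rs) = smult (r ^ n) (monom 1 n - 1)" .
  then have "smult (inverse (r ^ n)) (smult (r ^ n) (lp rs)) = smult (inverse (r ^ n)) (smult (r ^ n) (monom 1 n - 1))"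
    by simp
  then have "lp rs = monom 1 n - 1" using r0 by (simp only: smult_smult) simp
  moreover have "length rs = n" unfolding rs_def by simp
  ultimately show "contains_nth_roots_of_unity TYPE('a) n"
    unfolding contains_nth_roots_of_unity_def lp_def by metis
next
  assume "contains_nth_roots_of_unity TYPE('a) n"
  then obtain rs :: "'a list" where len: "length rs = n" and rs: "monom 1 n - 1 = lp rs"
    unfolding contains_nth_roots_of_unity_def lp_def by blast
  have n0: "0 < n" using assms by simp
  have rnz: "rs ! i \<noteq> 0" if i: "i < n" for i
  proof
    assume z: "rs ! i = 0"
    have "rs ! i \<in> set rs" using i len by simp
    then have "poly (lp rs) (rs ! i) = 0" by (rule lp_root)
    then show False using z n0 unfolding rs[symmetric] by (simp add: poly_monom power_0_left)
  qed
  define A :: "'a mat" where "A = mat n n (\<lambda>(i,j). if j = i then rs ! i else if j = Suc i then 1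
      else if i = n - 1 \<and> j = 0 then -1 else 0)"
  have Ac: "A \<in> carrier_mat n n" unfolding A_def by simp
  have Apat: "A $$ (i,j) \<noteq> 0 \<longleftrightarrow> pattern_A n i j" if "i < n" "j < n" for i j
    using that rnz assms unfolding A_def pattern_A_def by auto
  interpret P: patctx n A
    using Ac Apat assms by unfold_locales auto
  have ds: "P.ds = rs" using len by (intro nth_equalityI) (auto simp: A_def)
  have S: "P.S (n-1) = 1" by (rule prod.neutral) (auto simp: A_def)
  have K: "P.K = -1" unfolding S using assms by (simp add: A_def)
  have "monom 1 n = lp rs + 1" using rs by (simp add: algebra_simps)
  then have "A ^\<^sub>m n = P.E (lp rs) + P.E 1" by (simp add: P.E_monom[symmetric] P.E_add)
  also have "\<dots> = 0\<^sub>m n n" unfolding ds[symmetric] P.Glem K P.E_1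
    by (auto intro!: eq_matI)
  finally have "A ^\<^sub>m n = 0\<^sub>m n n" .
  moreover have "realization n (pattern_A n) A" unfolding realization_def using Ac Apat by auto
  ultimately show "potentially_nilpotent n (pattern_A n) TYPE('a::field)"
    unfolding potentially_nilpotent_def by blast
qed

end
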